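(* Let $p$ be an odd prime, let $v$ be an integer with $1<v<p-1$, let $g\in\{2,\dots,p-1\}$ be a primitive root modulo $p$, let $t\ge1$ and $b\in\{0,\dots,v-1\}$. Let $$\rho(b,t)=\#\{i\in[1,p-1]:\ g^i\,\%\,p\not\equiv b,\ g^{i+t+1}\,\%\,p\not\equiv b,\ g^{i+j}\,\%\,p\equiv b\ (1\le j\le t)\},$$ all congruences modulo $v$. Write $p=q\,g^{t+1}+r$ with $0\le r<g^{t+1}$. Then $$(v-1)\left\lfloor\frac{g}{v}\right\rfloor^{t}\left\lfloor\frac{(v-1)g}{v}\right\rfloor\left\lfloor\frac{q}{v}\right\rfloor\ \le\ \rho(b,t)\ \le\ (v-1)\left\lceil\frac{g}{v}\right\rceil^{t}\left\lceil\frac{(v-1)g}{v}\right\rceil\left\lceil\frac{q+1}{v}\right\rceil.$$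
   Context: $x\,\%\,p$ denotes the least nonnegative remainder of the integer $x$ modulo $p$. *)

theory Defs
  imports "HOL-Number_Theory.Number_Theory"
begin

definition rho :: "nat \<Rightarrow> nat \<Rightarrow> nat \<Rightarrow> nat \<Rightarrow> nat \<Rightarrow> nat" where
  "rho p g v b t = card {i \<in> {1..p-1}.
      \<not> [g ^ i mod p = b] (mod v) \<and>
      \<not> [g ^ (i + t + 1) mod p = b] (mod v) \<and>
      (\<forall>j \<in> {1..t}. [g ^ (i + j) mod p = b] (mod v))}"

end

theory Submission
  imports Defs
begin


lemma count_below:
  fixes v a N :: nat assumes "a < v"
  shows "card {u. u < N \<and> u mod v = a} = (N + (v - 1 - a)) div v"
proof (induction N)
  case 0
  then show ?case using assms by simp
next
  case (Suc N)
  have set: "{u. u < Suc N \<and> u mod v = a} = {u. u < N \<and> u mod v = a} \<union> (if N mod v = a then {N} else {})"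
    by (auto simp: less_Suc_eq)
  have c: "card {u. u < Suc N \<and> u mod v = a} = card {u. u < N \<and> u mod v = a} + (if N mod v = a then 1 else 0)"
    unfolding set by (auto simp: card_insert_if)
  have "(Suc N + (v - 1 - a)) div v = (N + (v - 1 - a)) div v + (if N mod v = a then 1 else 0)"
  proof -
    have "Suc N + (v - 1 - a) = Suc (N + (v - 1 - a))" by simp
    moreover have "(Suc (N + (v - 1 - a)) mod v = 0) = (N mod v = a)"
    proof -
      have "Suc (N + (v - 1 - a)) = N + (v - a)" using assms by simp
      hence e: "Suc (N + (v - 1 - a)) mod v = (N mod v + (v - a)) mod v"
        by (simp only:) (rule mod_add_left_eq[symmetric])
      define m where "m = N mod v"
      have m: "m < v" using assms m_def by simp
      have "((m + (v - a)) mod v = 0) = (m = a)"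
      proof (cases "m < a")
        case True
        then have "(m + (v - a)) mod v = m + (v - a)" using assms by (intro mod_less) simp
        then show ?thesis using True assms by simp
      next
        case False
        then have "m + (v - a) = (m - a) + v" using assms by simp
        then have "(m + (v - a)) mod v = (m - a + v) mod v" by (simp only:)
        also have "\<dots> = m - a" using m by simp
        finally have "(m + (v - a)) mod v = m - a" .
        then show ?thesis using False by simp
      qed
      then show ?thesis using e m_def by simp
    qed
    ultimately show ?thesis by (simp add: div_Suc)
  qed
  then show ?case using c Suc by simp
qed

lemma count_interval:
  fixes v a L n :: nat assumes "a < v"
  shows "n div v \<le> card {u. L \<le> u \<and> u < L + n \<and> u mod v = a}"
    and "card {u. L \<le> u \<and> u < L + n \<and> u mod v = a} \<le> (n + v - 1) div v"
proof -
  have v: "0 < v" using assms by simp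
  have set: "{u. L \<le> u \<and> u < L + n \<and> u mod v = a} = {u. u < L + n \<and> u mod v = a} - {u. u < L \<and> u mod v = a}"
    by auto
  define X where "X = L + (v - 1 - a)"
  have c: "card {u. L \<le> u \<and> u < L + n \<and> u mod v = a} = (X + n) div v - X div v"
    unfolding set
    by (subst card_Diff_subset) (auto simp: count_below[OF assms] X_def add.assoc add.commute[of n])
  have "(X + n) div v = X div v + n div v + (X mod v + n mod v) div v" by (rule div_add1_eq)
  then have lo: "X div v + n div v \<le> (X + n) div v" by simp
  have eqX: "X + n = X mod v + n + v * (X div v)" by simp
  have "(X + n) div v = (X mod v + n + v * (X div v)) div v" by (subst eqX) (rule refl)
  also have "\<dots> = X div v + (X mod v + n) div v"
    using v by (intro div_mult_self2) simp
  finally have "(X + n) div v = (X mod v + n) div v + X div v" by simp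
  moreover have "(X mod v + n) div v \<le> (n + v - 1) div v"
  proof (rule div_le_mono)
    have "X mod v < v" using v by simp
    then show "X mod v + n \<le> n + v - 1" by simp
  qed
  ultimately have hi: "(X + n) div v \<le> X div v + (n + v - 1) div v" by simp
  show "n div v \<le> card {u. L \<le> u \<and> u < L + n \<and> u mod v = a}" using c lo by simp
  show "card {u. L \<le> u \<and> u < L + n \<and> u mod v = a} \<le> (n + v - 1) div v" using c hi by simp
qed

lemma ceil_le_iff:
  fixes x G u :: nat assumes "0 < G"
  shows "((x + G - 1) div G \<le> u) = (x \<le> G * u)"
proof -
  have "((x + G - 1) div G \<le> u) = ((x + G - 1) div G < Suc u)" by (simp only: less_Suc_eq_le)
  also have "\<dots> = (x + G - 1 < Suc u * G)" using assms by (rule div_less_iff_less_mult)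
  also have "\<dots> = (x \<le> G * u)" using assms by (auto simp: algebra_simps)
  finally show ?thesis .
qed

lemma fiber_count:
  fixes p q r G D a v :: nat
  assumes "0 < G" "0 < p" "p = q * G + r" "r \<le> G" "D < G" "a < v"
  shows "q div v \<le> card {u. u < p \<and> u mod v = a \<and> G * u div p = D}"
    and "card {u. u < p \<and> u mod v = a \<and> G * u div p = D} \<le> (q + 1 + v - 1) div v"
proof -
  define L where "L = (p * D + G - 1) div G"
  define R where "R = (p * D + p + G - 1) div G"
  have iff: "(G * u div p = D) = (L \<le> u \<and> u < R)" for u
  proof -
    have "(G * u div p = D) = (p * D \<le> G * u \<and> G * u < p * D + p)"
    proof
      assume h: "G * u div p = D"
      have "p * D \<le> G * u" unfolding h[symmetric] by (simp add: mult.commute)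
      moreover have "G * u < p * D + p"
        using div_less_iff_less_mult[OF assms(2), of "G * u" "Suc D"] h by (simp add: algebra_simps)
      ultimately show "p * D \<le> G * u \<and> G * u < p * D + p" by simp
    next
      assume h: "p * D \<le> G * u \<and> G * u < p * D + p"
      then show "G * u div p = D" by (intro div_nat_eqI) (auto simp: algebra_simps)
    qed
    also have "\<dots> = (L \<le> u \<and> u < R)"
      unfolding L_def R_def using ceil_le_iff[OF assms(1), of "p * D" u] ceil_le_iff[OF assms(1), of "p * D + p" u]
      by auto
    finally show ?thesis .
  qed
  have Rp: "R \<le> p"
  proof -
    have "p * D + p \<le> G * p" proof -
      have "p * D + p = p * Suc D" by simp
      also have "\<dots> \<le> p * G" using assms(5) by (intro mult_le_mono2) simp
      finally show ?thesis by (simp add: mult.commute)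
    qed
    then have "R \<le> (G * p + G - 1) div G" unfolding R_def by (intro div_le_mono) simp
    also have "\<dots> = p" proof -
      have "G * p + G - 1 = (G - 1) + p * G" using assms(1) by (simp add: mult.commute)
      then have "(G * p + G - 1) div G = p + (G - 1) div G" using assms(1) by (simp only: div_mult_self1)
      then show ?thesis using assms(1) by simp
    qed
    finally show ?thesis .
  qed
  have LR: "L \<le> R" unfolding L_def R_def by (intro div_le_mono) simp
  have set: "{u. u < p \<and> u mod v = a \<and> G * u div p = D} = {u. L \<le> u \<and> u < L + (R - L) \<and> u mod v = a}"
  proof -
    have "L + (R - L) = R" using LR by simp
    moreover have "(u < p \<and> u mod v = a \<and> G * u div p = D) = (L \<le> u \<and> u < R \<and> u mod v = a)" for u
      using iff[of u] Rp by auto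
    ultimately show ?thesis by simp
  qed
  have R2: "R = q + (p * D + r + G - 1) div G"
  proof -
    have "p * D + p + G - 1 = (p * D + r + G - 1) + q * G" using assms(1,3) by simp
    moreover have "G \<noteq> 0" using assms(1) by simp
    ultimately show ?thesis unfolding R_def by (simp only:) (rule div_mult_self1)
  qed
  have "L \<le> (p * D + r + G - 1) div G" unfolding L_def by (intro div_le_mono) simp
  then have len1: "q \<le> R - L" using R2 by simp
  have "(p * D + r + G - 1) div G \<le> (p * D + G - 1 + G) div G" using assms(4) by (intro div_le_mono) simp
  also have "\<dots> = L + 1" unfolding L_def using assms(1) by (subst div_add_self2) auto
  finally have len2: "R - L \<le> q + 1" using R2 by simp
  show "q div v \<le> card {u. u < p \<and> u mod v = a \<and> G * u div p = D}"
    unfolding set using count_interval(1)[OF assms(6), of "R - L" L] len1 div_le_mono[OF len1, of v] by linarith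
  show "card {u. u < p \<and> u mod v = a \<and> G * u div p = D} \<le> (q + 1 + v - 1) div v"
    unfolding set using count_interval(2)[OF assms(6), of L "R - L"] div_le_mono[of "R - L + v - 1" "q + 1 + v - 1" v] len2 by linarith
qed



lemma split_sum:
  fixes m :: nat
  shows "card {D. D < g * m \<and> P D} = (\<Sum>d<g. card {D'. D' < m \<and> P (d * m + D')})"
proof (induction g)
  case 0
  then show ?case by simp
next
  case (Suc g)
  have set: "{D. D < Suc g * m \<and> P D} = {D. D < g * m \<and> P D} \<union> (\<lambda>D'. g * m + D') ` {D'. D' < m \<and> P (g * m + D')}"
  proof (intro equalityI subsetI)
    fix x assume x: "x \<in> {D. D < Suc g * m \<and> P D}"
    show "x \<in> {D. D < g * m \<and> P D} \<union> (\<lambda>D'. g * m + D') ` {D'. D' < m \<and> P (g * m + D')}"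
    proof (cases "x < g * m")
      case True
      then show ?thesis using x by simp
    next
      case False
      then have e: "x = g * m + (x - g * m)" by simp
      moreover have "x - g * m < m" using False x by auto
      moreover have "P (g * m + (x - g * m))" using x e by simp
      ultimately show ?thesis by blast
    qed
  qed auto
  have "card {D. D < Suc g * m \<and> P D} = card {D. D < g * m \<and> P D} + card ((\<lambda>D'. g * m + D') ` {D'. D' < m \<and> P (g * m + D')})"
    unfolding set by (rule card_Un_disjoint) auto
  also have "card ((\<lambda>D'. g * m + D') ` {D'. D' < m \<and> P (g * m + D')}) = card {D'. D' < m \<and> P (g * m + D')}"
    by (rule card_image) (auto simp: inj_on_def)
  finally show ?case using Suc by simp
qed

lemma residue_count:
  fixes p v g :: nat and c :: int
  assumes "coprime p v" "0 < v"
  shows "g div v \<le> card {d. d < g \<and> [int p * int d = c] (mod int v)}"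
    and "card {d. d < g \<and> [int p * int d = c] (mod int v)} \<le> (g + v - 1) div v"
proof -
  have "coprime (int p) (int v)" using assms by simp
  then obtain p' where p': "[int p * p' = 1] (mod int v)" using cong_solve_coprime_int by blast
  define a where "a = nat ((p' * c) mod int v)"
  have av: "a < v" unfolding a_def using assms by (simp add: nat_less_iff)
  have iff: "[int p * int d = c] (mod int v) = (d mod v = a)" for d
  proof -
    have "[int p * int d = c] (mod int v) = [int d = p' * c] (mod int v)"
    proof
      assume h: "[int p * int d = c] (mod int v)"
      have "[p' * (int p * int d) = p' * c] (mod int v)" using h by (rule cong_scalar_left)
      moreover have "[p' * (int p * int d) = int d] (mod int v)"
        using cong_scalar_right[OF p', of "int d"] by (simp add: ac_simps)
      ultimately show "[int d = p' * c] (mod int v)" by (meson cong_sym cong_trans)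
    next
      assume h: "[int d = p' * c] (mod int v)"
      have "[int p * int d = int p * (p' * c)] (mod int v)" using h by (rule cong_scalar_left)
      moreover have "[int p * (p' * c) = c] (mod int v)"
        using cong_scalar_right[OF p', of c] by (simp add: ac_simps)
      ultimately show "[int p * int d = c] (mod int v)" by (meson cong_trans)
    qed
    also have "\<dots> = (int d mod int v = (p' * c) mod int v)" by (simp add: cong_def)
    also have "\<dots> = (int (d mod v) = (p' * c) mod int v)" by (simp add: of_nat_mod)
    also have "\<dots> = (d mod v = a)"
    proof -
      have "(p' * c) mod int v \<ge> 0" using assms by simp
      then show ?thesis unfolding a_def by auto
    qed
    finally show ?thesis .
  qed
  have set: "{d. d < g \<and> [int p * int d = c] (mod int v)} = {u. 0 \<le> u \<and> u < 0 + g \<and> u mod v = a}"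
    using iff by auto
  show "g div v \<le> card {d. d < g \<and> [int p * int d = c] (mod int v)}"
    unfolding set by (rule count_interval(1)[OF av])
  show "card {d. d < g \<and> [int p * int d = c] (mod int v)} \<le> (g + v - 1) div v"
    unfolding set by (rule count_interval(2)[OF av])
qed



definition dcond :: "nat \<Rightarrow> nat \<Rightarrow> nat \<Rightarrow> nat \<Rightarrow> nat \<Rightarrow> int \<Rightarrow> nat \<Rightarrow> bool" where
  "dcond p g v b n y D = ((\<forall>j\<in>{1..<n}. [int g ^ j * y - int p * int (D div g ^ (n - j)) = int b] (mod int v))
      \<and> \<not> [int g ^ n * y - int p * int D = int b] (mod int v))"

definition dcnt :: "nat \<Rightarrow> nat \<Rightarrow> nat \<Rightarrow> nat \<Rightarrow> nat \<Rightarrow> int \<Rightarrow> nat" where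
  "dcnt p g v b n y = card {D. D < g ^ n \<and> dcond p g v b n y D}"

lemma ball_split:
  assumes "1 \<le> n"
  shows "(\<forall>j\<in>{1..<Suc n}. P j) = (P 1 \<and> (\<forall>j\<in>{1..<n}. P (Suc j)))"
proof
  assume "\<forall>j\<in>{1..<Suc n}. P j"
  then show "P 1 \<and> (\<forall>j\<in>{1..<n}. P (Suc j))" using assms by auto
next
  assume h: "P 1 \<and> (\<forall>j\<in>{1..<n}. P (Suc j))"
  show "\<forall>j\<in>{1..<Suc n}. P j"
  proof
    fix j assume j: "j \<in> {1..<Suc n}"
    show "P j"
    proof (cases "j = 1")
      case True then show ?thesis using h by simp
    next
      case False
      then obtain k where "j = Suc k" "k \<in> {1..<n}" using j by (cases j) auto
      then show ?thesis using h by simp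
    qed
  qed
qed

lemma div_shift:
  fixes g d n D' k :: nat assumes "0 < g" "k \<le> n"
  shows "(d * g ^ n + D') div g ^ k = d * g ^ (n - k) + D' div g ^ k"
proof -
  have "g ^ n = g ^ (n - k) * g ^ k" using assms(2) by (simp add: power_add[symmetric])
  then have e: "d * g ^ n + D' = D' + (d * g ^ (n - k)) * g ^ k" by simp
  have "g ^ k \<noteq> 0" using assms(1) by simp
  then show ?thesis unfolding e by (rule div_mult_self1)
qed

lemma dcond_step:
  fixes p g v b n d D' :: nat and y :: int
  assumes "0 < g" "1 \<le> n" "D' < g ^ n"
  shows "dcond p g v b (Suc n) y (d * g ^ n + D') =
    ([int g * y - int p * int d = int b] (mod int v) \<and> dcond p g v b n (int g * y - int p * int d) D')"
proof -
  define z where "z = int g * y - int p * int d"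
  have first: "(int g ^ 1 * y - int p * int ((d * g ^ n + D') div g ^ (Suc n - 1))) = z"
    using assms div_shift[OF assms(1), of n n d D'] by (simp add: z_def)
  have mid: "int g ^ Suc j * y - int p * int ((d * g ^ n + D') div g ^ (Suc n - Suc j))
      = int g ^ j * z - int p * int (D' div g ^ (n - j))" if "j \<in> {1..<n}" for j
  proof -
    have "(d * g ^ n + D') div g ^ (n - j) = d * g ^ j + D' div g ^ (n - j)"
      using div_shift[OF assms(1), of "n - j" n d D'] that by simp
    then show ?thesis by (simp add: z_def algebra_simps)
  qed
  have last: "int g ^ Suc n * y - int p * int (d * g ^ n + D') = int g ^ n * z - int p * int D'"
    by (simp add: z_def algebra_simps)
  show ?thesis
    unfolding dcond_def ball_split[OF assms(2)] first last
    using mid by (auto simp: z_def)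
qed

lemma cong_swap:
  fixes A B C :: int
  shows "[A - B = C] (mod m) = [B = A - C] (mod m)"
  by (simp add: cong_iff_dvd_diff) (metis dvd_minus_iff minus_diff_eq diff_diff_eq add.commute diff_diff_eq2)

lemma dcnt_rec:
  assumes "0 < g" "1 \<le> n"
  shows "dcnt p g v b (Suc n) y = (\<Sum>d<g. if [int g * y - int p * int d = int b] (mod int v)
      then dcnt p g v b n (int g * y - int p * int d) else 0)"
proof -
  have "dcnt p g v b (Suc n) y = card {D. D < g * g ^ n \<and> dcond p g v b (Suc n) y D}"
    unfolding dcnt_def by simp
  also have "\<dots> = (\<Sum>d<g. card {D'. D' < g ^ n \<and> dcond p g v b (Suc n) y (d * g ^ n + D')})"
    by (rule split_sum)
  also have "\<dots> = (\<Sum>d<g. if [int g * y - int p * int d = int b] (mod int v)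
      then dcnt p g v b n (int g * y - int p * int d) else 0)"
  proof (rule sum.cong[OF refl])
    fix d assume "d \<in> {..<g}"
    have "{D'. D' < g ^ n \<and> dcond p g v b (Suc n) y (d * g ^ n + D')} =
      {D'. D' < g ^ n \<and> ([int g * y - int p * int d = int b] (mod int v) \<and> dcond p g v b n (int g * y - int p * int d) D')}"
      using dcond_step[OF assms] by blast
    then show "card {D'. D' < g ^ n \<and> dcond p g v b (Suc n) y (d * g ^ n + D')} = (if [int g * y - int p * int d = int b] (mod int v)
      then dcnt p g v b n (int g * y - int p * int d) else 0)"
      unfolding dcnt_def by auto
  qed
  finally show ?thesis .
qed

lemma dcnt_1:
  "dcnt p g v b 1 y = card {d. d < g \<and> \<not> [int g * y - int p * int d = int b] (mod int v)}"
  unfolding dcnt_def dcond_def by simp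

lemma sum_if_const:
  fixes c g :: nat
  shows "(\<Sum>d<g. if R d then c else 0) = c * card {d. d < g \<and> R d}"
proof -
  have "(\<Sum>d<g. if R d then c else 0) = (\<Sum>d\<in>{d \<in> {..<g}. R d}. c)"
    by (rule sum.inter_filter[symmetric]) simp
  also have "{d \<in> {..<g}. R d} = {d. d < g \<and> R d}" by auto
  finally show ?thesis by simp
qed

lemma dcnt_bounds:
  fixes p g v b :: nat
  assumes "coprime p v" "0 < v" "0 < g"
  shows "(g div v) ^ m * (g - (g + v - 1) div v) \<le> dcnt p g v b (Suc m) y
     \<and> dcnt p g v b (Suc m) y \<le> ((g + v - 1) div v) ^ m * (g - g div v)"
proof (induction m arbitrary: y)
  case 0
  define E where "E = card {d. d < g \<and> [int g * y - int p * int d = int b] (mod int v)}"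
  have Eset: "{d. d < g \<and> [int g * y - int p * int d = int b] (mod int v)} = {d. d < g \<and> [int p * int d = int g * y - int b] (mod int v)}"
    by (simp add: cong_swap)
  have E1: "g div v \<le> E" unfolding E_def Eset by (rule residue_count(1)[OF assms(1,2)])
  have E2: "E \<le> (g + v - 1) div v" unfolding E_def Eset by (rule residue_count(2)[OF assms(1,2)])
  have S: "{d. d < g \<and> \<not> [int g * y - int p * int d = int b] (mod int v)} = {..<g} - {d. d < g \<and> [int g * y - int p * int d = int b] (mod int v)}"
    by auto
  then have "dcnt p g v b 1 y = g - E" unfolding dcnt_1 E_def S by (subst card_Diff_subset) auto
  moreover have "E \<le> card {..<g}" unfolding E_def by (rule card_mono) auto
  ultimately show ?case using E1 E2 by auto
next
  case (Suc m)
  define R where "R d = [int g * y - int p * int d = int b] (mod int v)" for d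
  define z where "z d = int g * y - int p * int d" for d
  define lo where "lo = (g div v) ^ m * (g - (g + v - 1) div v)"
  define hi where "hi = ((g + v - 1) div v) ^ m * (g - g div v)"
  define E where "E = card {d. d < g \<and> R d}"
  have Eset: "{d. d < g \<and> R d} = {d. d < g \<and> [int p * int d = int g * y - int b] (mod int v)}"
    unfolding R_def by (simp add: cong_swap)
  have E1: "g div v \<le> E" unfolding E_def Eset by (rule residue_count(1)[OF assms(1,2)])
  have E2: "E \<le> (g + v - 1) div v" unfolding E_def Eset by (rule residue_count(2)[OF assms(1,2)])
  have rec: "dcnt p g v b (Suc (Suc m)) y = (\<Sum>d<g. if R d then dcnt p g v b (Suc m) (z d) else 0)"
    unfolding R_def z_def by (rule dcnt_rec[OF assms(3)]) simp
  have "(\<Sum>d<g. if R d then lo else 0) \<le> (\<Sum>d<g. if R d then dcnt p g v b (Suc m) (z d) else 0)"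
    using Suc.IH unfolding lo_def by (intro sum_mono) auto
  moreover have "(\<Sum>d<g. if R d then dcnt p g v b (Suc m) (z d) else 0) \<le> (\<Sum>d<g. if R d then hi else 0)"
    using Suc.IH unfolding hi_def by (intro sum_mono) auto
  ultimately have "lo * E \<le> dcnt p g v b (Suc (Suc m)) y \<and> dcnt p g v b (Suc (Suc m)) y \<le> hi * E"
    using rec unfolding sum_if_const E_def by simp
  moreover have "(g div v) ^ Suc m * (g - (g + v - 1) div v) \<le> lo * E"
    using E1 unfolding lo_def by (simp add: mult_le_mono)
  moreover have "hi * E \<le> ((g + v - 1) div v) ^ Suc m * (g - g div v)"
    using E2 unfolding hi_def by (simp add: mult_le_mono)
  ultimately show ?case by linarith
qed



lemma card_fibers:
  assumes "finite A" "finite B" "f ` A \<subseteq> B"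
  shows "card {x\<in>A. Q (f x)} = (\<Sum>y\<in>B. if Q y then card {x\<in>A. f x = y} else 0)"
proof -
  have "{x\<in>A. Q (f x)} = (\<Union>y\<in>{y\<in>B. Q y}. {x\<in>A. f x = y})" using assms(3) by auto
  then have "card {x\<in>A. Q (f x)} = (\<Sum>y\<in>{y\<in>B. Q y}. card {x\<in>A. f x = y})"
    using assms by (simp only:) (rule card_UN_disjoint, auto)
  also have "\<dots> = (\<Sum>y\<in>B. if Q y then card {x\<in>A. f x = y} else 0)"
    using assms(2) by (rule sum.inter_filter)
  finally show ?thesis .
qed

lemma ceiling_nat_div:
  fixes m n :: nat assumes "0 < n"
  shows "\<lceil>real m / real n\<rceil> = int ((m + n - 1) div n)"
proof -
  define k where "k = (m + n - 1) div n"
  have a: "n * k \<le> m + n - 1" unfolding k_def by simp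
  have b: "m + n - 1 < n * (k + 1)" unfolding k_def using assms
    by (metis add.commute div_less_iff_less_mult less_add_one mult.commute)
  have "m \<le> n * k" using b assms by simp
  then have c: "real m \<le> real n * real k" by (metis of_nat_le_iff of_nat_mult)
  have "n * k < m + n" using a assms by simp
  then have d: "real n * real k < real m + real n" by (metis of_nat_less_iff of_nat_mult of_nat_add)
  have "real k - 1 < real m / real n \<and> real m / real n \<le> real k"
    using c d assms by (simp add: field_simps)
  then show ?thesis unfolding k_def[symmetric] by (simp add: ceiling_eq_iff)
qed



definition Pdef :: "nat \<Rightarrow> nat \<Rightarrow> nat \<Rightarrow> nat \<Rightarrow> nat \<Rightarrow> nat \<Rightarrow> bool" where
  "Pdef p g v b t u = (\<not> [u = b] (mod v) \<and> \<not> [g ^ Suc t * u mod p = b] (mod v) \<and>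
      (\<forall>j\<in>{1..t}. [g ^ j * u mod p = b] (mod v)))"

lemma cong_range_eq:
  fixes i j m :: nat
  assumes "[i = j] (mod m)" "1 \<le> i" "i \<le> m" "1 \<le> j" "j \<le> m"
  shows "i = j"
proof -
  have e: "i mod m = j mod m" using assms(1) by (simp add: cong_def)
  show ?thesis
  proof (cases "i = m")
    case True
    then show ?thesis using e assms by (cases "j = m") auto
  next
    case False
    then have "i < m" using assms by simp
    then show ?thesis using e assms by (cases "j = m") auto
  qed
qed

lemma primroot_bij:
  assumes "prime p" "residue_primroot p g"
  shows "inj_on (\<lambda>i. g ^ i mod p) {1..p-1}" and "(\<lambda>i. g ^ i mod p) ` {1..p-1} = {1..p-1}"
proof -
  have p1: "p > 1" using assms(1) prime_gt_1_nat by blast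
  have cop: "coprime p g" and ord: "ord p g = totient p"
    using assms(2) by (auto simp: residue_primroot_def)
  have ordp: "ord p g = p - 1" using ord totient_prime[OF assms(1)] by simp
  show inj: "inj_on (\<lambda>i. g ^ i mod p) {1..p-1}"
  proof (rule inj_onI)
    fix i j assume i: "i \<in> {1..p-1}" and j: "j \<in> {1..p-1}" and h: "g ^ i mod p = g ^ j mod p"
    have "[g ^ i = g ^ j] (mod p)" using h by (simp add: cong_def)
    then have "[i = j] (mod (p - 1))" using order_divides_expdiff[OF cop] ordp by simp
    then show "i = j" using i j by (intro cong_range_eq) auto
  qed
  have sub: "(\<lambda>i. g ^ i mod p) ` {1..p-1} \<subseteq> {1..p-1}"
  proof
    fix x assume "x \<in> (\<lambda>i. g ^ i mod p) ` {1..p-1}"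
    then obtain i where x: "x = g ^ i mod p" by auto
    have "\<not> p dvd g ^ i"
    proof
      assume "p dvd g ^ i"
      then have "p dvd g" using assms(1) prime_dvd_power by blast
      then show False using coprime_common_divisor_nat[OF cop dvd_refl] p1 by simp
    qed
    then have "x \<noteq> 0" using x by (simp add: dvd_eq_mod_eq_0)
    moreover have "x < p" using x p1 by simp
    ultimately show "x \<in> {1..p-1}" by simp
  qed
  show "(\<lambda>i. g ^ i mod p) ` {1..p-1} = {1..p-1}"
  proof (rule card_subset_eq[rotated])
    show "card ((\<lambda>i. g ^ i mod p) ` {1..p-1}) = card {1..p-1}" using card_image[OF inj] by simp
  qed (use sub in auto)
qed

lemma rho_reduce:
  assumes "prime p" "residue_primroot p g" "1 \<le> t"
  shows "rho p g v b t = card {u. u < p \<and> Pdef p g v b t u}"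
proof -
  let ?f = "\<lambda>i. g ^ i mod p"
  have p1: "p > 1" using assms(1) prime_gt_1_nat by blast
  have fe: "g ^ (i + k) mod p = g ^ k * (g ^ i mod p) mod p" for i k
    by (simp add: power_add mod_mult_right_eq mult.commute)
  have "rho p g v b t = card {i \<in> {1..p-1}. Pdef p g v b t (?f i)}"
    unfolding rho_def Pdef_def
  proof (rule arg_cong[where f = card], rule Collect_cong)
    fix i
    have a: "g ^ (i + t + 1) mod p = g ^ Suc t * (g ^ i mod p) mod p" using fe[of i "Suc t"] by simp
    have b: "g ^ (i + j) mod p = g ^ j * (g ^ i mod p) mod p" for j using fe[of i j] by simp
    show "(i \<in> {1..p - 1} \<and> \<not> [g ^ i mod p = b] (mod v) \<and> \<not> [g ^ (i + t + 1) mod p = b] (mod v) \<and>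
          (\<forall>j\<in>{1..t}. [g ^ (i + j) mod p = b] (mod v))) =
         (i \<in> {1..p - 1} \<and> \<not> [g ^ i mod p = b] (mod v) \<and> \<not> [g ^ Suc t * (g ^ i mod p) mod p = b] (mod v) \<and>
          (\<forall>j\<in>{1..t}. [g ^ j * (g ^ i mod p) mod p = b] (mod v)))"
      unfolding a b by simp
  qed
  also have "\<dots> = card (?f ` {i \<in> {1..p-1}. Pdef p g v b t (?f i)})"
    by (rule card_image[symmetric]) (rule inj_on_subset[OF primroot_bij(1)[OF assms(1,2)]], auto)
  also have "?f ` {i \<in> {1..p-1}. Pdef p g v b t (?f i)} = {u \<in> ?f ` {1..p-1}. Pdef p g v b t u}"
    by auto
  also have "\<dots> = {u. u < p \<and> Pdef p g v b t u}"
  proof -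
    have "\<not> Pdef p g v b t 0" using assms(3) unfolding Pdef_def by auto
    then show ?thesis unfolding primroot_bij(2)[OF assms(1,2)] using p1
      by (auto simp: Suc_le_eq) (metis neq0_conv)
  qed
  finally show ?thesis .
qed



lemma div_nest:
  fixes g u p j n :: nat assumes "0 < g" "j \<le> n"
  shows "(g ^ n * u div p) div g ^ (n - j) = g ^ j * u div p"
proof -
  have e: "g ^ n * u = (g ^ j * u) * g ^ (n - j)" using assms(2) by (simp add: power_add[symmetric] ac_simps)
  have "(g ^ n * u div p) div g ^ (n - j) = g ^ n * u div (p * g ^ (n - j))" by (simp add: div_mult2_eq)
  also have "\<dots> = (g ^ j * u) * g ^ (n - j) div (p * g ^ (n - j))" by (simp only: e)
  also have "\<dots> = g ^ j * u div p"
    using assms(1) by (intro div_mult_mult2) simp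
  finally show ?thesis .
qed

lemma key_cong:
  fixes g u p j n v b :: nat assumes "0 < g" "j \<le> n"
  shows "[g ^ j * u mod p = b] (mod v) =
    [int g ^ j * int (u mod v) - int p * int ((g ^ n * u div p) div g ^ (n - j)) = int b] (mod int v)"
proof -
  define X where "X = g ^ j * u"
  have "int (X mod p) = int X - int p * int (X div p)"
    by (metis add_diff_cancel_right' mod_mult_div_eq of_nat_add of_nat_mult)
  then have "[X mod p = b] (mod v) = [int X - int p * int (X div p) = int b] (mod int v)"
    by (metis cong_int_iff)
  also have "int X = int g ^ j * int u" unfolding X_def by simp
  also have "[int g ^ j * int u - int p * int (X div p) = int b] (mod int v) =
      [int g ^ j * int (u mod v) - int p * int (X div p) = int b] (mod int v)"
  proof -
    have "[int u = int (u mod v)] (mod int v)" by (simp add: cong_def of_nat_mod[symmetric])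
    then have "[int g ^ j * int u - int p * int (X div p) = int g ^ j * int (u mod v) - int p * int (X div p)] (mod int v)"
      by (intro cong_diff cong_scalar_left) auto
    then show ?thesis by (meson cong_sym cong_trans)
  qed
  finally show ?thesis unfolding X_def div_nest[OF assms] .
qed

lemma Pdef_Q:
  fixes p g v b t u :: nat assumes "0 < g"
  shows "Pdef p g v b t u = (\<not> [u mod v = b] (mod v) \<and> dcond p g v b (Suc t) (int (u mod v)) (g ^ Suc t * u div p))"
proof -
  have last: "[g ^ Suc t * u mod p = b] (mod v) = [int g ^ Suc t * int (u mod v) - int p * int (g ^ Suc t * u div p) = int b] (mod int v)"
    using key_cong[OF assms, of "Suc t" "Suc t" u p b v] by simp
  have mid: "(\<forall>j\<in>{1..t}. [g ^ j * u mod p = b] (mod v)) =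
     (\<forall>j\<in>{1..<Suc t}. [int g ^ j * int (u mod v) - int p * int ((g ^ Suc t * u div p) div g ^ (Suc t - j)) = int b] (mod int v))"
    using key_cong[OF assms, of _ "Suc t" u p b v] by auto
  have first: "[u = b] (mod v) = [u mod v = b] (mod v)" by (simp add: cong_def)
  show ?thesis unfolding Pdef_def dcond_def last mid first by blast
qed



theorem corollary9:
  fixes p v g t b q r :: nat
  assumes "prime p" and "odd p"
    and "1 < v" and "v < p - 1"
    and "g \<in> {2..p-1}" and "residue_primroot p g"
    and "t \<ge> 1" and "b \<in> {0..v-1}"
    and "p = q * g ^ (t + 1) + r" and "r < g ^ (t + 1)"
  shows "real (v - 1) * real_of_int (\<lfloor>real g / real v\<rfloor> ^ t)
            * real_of_int \<lfloor>real ((v - 1) * g) / real v\<rfloor>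
            * real_of_int \<lfloor>real q / real v\<rfloor> \<le> real (rho p g v b t) \<and>
         real (rho p g v b t) \<le> real (v - 1) * real_of_int (\<lceil>real g / real v\<rceil> ^ t)
            * real_of_int \<lceil>real ((v - 1) * g) / real v\<rceil>
            * real_of_int \<lceil>real (q + 1) / real v\<rceil>"
proof -
  have p1: "p > 1" using assms(1) prime_gt_1_nat by blast
  have p0: "0 < p" using p1 by simp
  have v0: "0 < v" using assms(3) by simp
  have g0: "0 < g" using assms(5) by simp
  have bv: "b < v" using assms(8) assms(3) by auto
  have cop: "coprime p v"
  proof (rule prime_imp_coprime[OF assms(1)])
    show "\<not> p dvd v" using assms(3,4) by (auto dest: dvd_imp_le)
  qed
  define G where "G = g ^ Suc t"
  have G0: "0 < G" unfolding G_def using g0 by simp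
  have pG: "p = q * G + r" "r \<le> G" using assms(9,10) unfolding G_def by simp_all
  define Q where "Q y = (\<not> [fst y = b] (mod v) \<and> dcond p g v b (Suc t) (int (fst y)) (snd y))" for y :: "nat \<times> nat"
  define f where "f u = (u mod v, G * u div p)" for u
  define B where "B = {..<v} \<times> {..<G}"
  define fib where "fib y = card {u\<in>{..<p}. f u = y}" for y
  define LO where "LO = (g div v) ^ t * (g - (g + v - 1) div v)"
  define HI where "HI = ((g + v - 1) div v) ^ t * (g - g div v)"
  define M where "M = card {y\<in>B. Q y}"
  have rho1: "rho p g v b t = card {u\<in>{..<p}. Q (f u)}"
  proof -
    have "rho p g v b t = card {u. u < p \<and> Pdef p g v b t u}"
      by (rule rho_reduce[OF assms(1,6,7)])
    also have "{u. u < p \<and> Pdef p g v b t u} = {u\<in>{..<p}. Q (f u)}"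
      unfolding Q_def f_def G_def using Pdef_Q[OF g0] by auto
    finally show ?thesis .
  qed
  have fB: "f ` {..<p} \<subseteq> B"
  proof
    fix y assume "y \<in> f ` {..<p}"
    then obtain u where u: "u < p" "y = f u" by auto
    have "u mod v < v" using v0 by simp
    moreover have "G * u div p < G"
    proof -
      have "G * u < G * p" using u(1) G0 by simp
      then show ?thesis using p0 by (simp add: div_less_iff_less_mult mult.commute)
    qed
    ultimately show "y \<in> B" unfolding B_def f_def u(2) by simp
  qed
  have finB: "finite B" unfolding B_def by simp
  have rho2: "rho p g v b t = (\<Sum>y\<in>B. if Q y then fib y else 0)"
    unfolding rho1 fib_def by (rule card_fibers[OF _ finB fB]) simp
  have fibb: "q div v \<le> fib y \<and> fib y \<le> (q + 1 + v - 1) div v" if "y \<in> B" for y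
  proof -
    obtain a D where y0: "y = (a, D)" by (cases y)
    have y: "y = (a, D)" "a < v" "D < G" using that y0 unfolding B_def by auto
    have "fib y = card {u. u < p \<and> u mod v = a \<and> G * u div p = D}"
      unfolding fib_def f_def y(1) by (rule arg_cong[where f = card]) auto
    then show ?thesis using fiber_count[OF G0 p0 pG y(3,2)] by simp
  qed
  have sumc: "(\<Sum>y\<in>B. if Q y then c else 0) = c * M" for c :: nat
  proof -
    have "(\<Sum>y\<in>B. if Q y then c else 0) = (\<Sum>y\<in>{y\<in>B. Q y}. c)"
      by (rule sum.inter_filter[symmetric]) (rule finB)
    then show ?thesis unfolding M_def by simp
  qed
  have rho_lo: "(q div v) * M \<le> rho p g v b t"
    unfolding rho2 sumc[symmetric] using fibb by (intro sum_mono) auto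
  have rho_hi: "rho p g v b t \<le> ((q + 1 + v - 1) div v) * M"
    unfolding rho2 sumc[symmetric] using fibb by (intro sum_mono) auto
  have M_eq: "M = (\<Sum>a<v. if a \<noteq> b then dcnt p g v b (Suc t) (int a) else 0)"
  proof -
    have "{y\<in>B. Q y} = (SIGMA a:{..<v}. {D. D < G \<and> Q (a, D)})" unfolding B_def by auto
    then have "M = (\<Sum>a<v. card {D. D < G \<and> Q (a, D)})" unfolding M_def by simp
    also have "\<dots> = (\<Sum>a<v. if a \<noteq> b then dcnt p g v b (Suc t) (int a) else 0)"
    proof (rule sum.cong[OF refl])
      fix a assume a: "a \<in> {..<v}"
      have "[a = b] (mod v) = (a = b)" using a bv by (simp add: cong_def)
      then show "card {D. D < G \<and> Q (a, D)} = (if a \<noteq> b then dcnt p g v b (Suc t) (int a) else 0)"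
        unfolding Q_def dcnt_def G_def by auto
    qed
    finally show ?thesis .
  qed
  have cardv: "card {a. a < v \<and> a \<noteq> b} = v - 1"
  proof -
    have "{a. a < v \<and> a \<noteq> b} = {..<v} - {b}" by auto
    then show ?thesis using bv by simp
  qed
  have db: "LO \<le> dcnt p g v b (Suc t) y \<and> dcnt p g v b (Suc t) y \<le> HI" for y
    unfolding LO_def HI_def by (rule dcnt_bounds[OF cop v0 g0])
  have M_lo: "LO * (v - 1) \<le> M"
  proof -
    have "(\<Sum>a<v. if a \<noteq> b then LO else 0) \<le> M" unfolding M_eq using db by (intro sum_mono) auto
    then show ?thesis unfolding sum_if_const cardv by simp
  qed
  have M_hi: "M \<le> HI * (v - 1)"
  proof -
    have "M \<le> (\<Sum>a<v. if a \<noteq> b then HI else 0)" unfolding M_eq using db by (intro sum_mono) auto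
    then show ?thesis unfolding sum_if_const cardv by simp
  qed
  have nat_lo: "(v - 1) * LO * (q div v) \<le> rho p g v b t"
  proof -
    have "(v - 1) * LO \<le> M" using M_lo by (simp add: mult.commute)
    then have "(v - 1) * LO * (q div v) \<le> M * (q div v)" by (rule mult_le_mono1)
    also have "\<dots> \<le> rho p g v b t" using rho_lo by (simp add: mult.commute)
    finally show ?thesis .
  qed
  have nat_hi: "rho p g v b t \<le> (v - 1) * HI * ((q + 1 + v - 1) div v)"
  proof -
    have "M \<le> (v - 1) * HI" using M_hi by (simp add: mult.commute)
    then have "M * ((q + 1 + v - 1) div v) \<le> (v - 1) * HI * ((q + 1 + v - 1) div v)" by (rule mult_le_mono1)
    moreover have "rho p g v b t \<le> M * ((q + 1 + v - 1) div v)" using rho_hi by (simp add: mult.commute)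
    ultimately show ?thesis by (rule le_trans[rotated])
  qed
  have fl: "\<lfloor>real g / real v\<rfloor> = int (g div v)" by (rule floor_divide_of_nat_eq)
  have ce: "\<lceil>real g / real v\<rceil> = int ((g + v - 1) div v)" using ceiling_nat_div[OF v0] .
  have ceq: "\<lceil>real (q + 1) / real v\<rceil> = int ((q + 1 + v - 1) div v)" using ceiling_nat_div[OF v0] .
  have flq: "\<lfloor>real q / real v\<rfloor> = int (q div v)" by (rule floor_divide_of_nat_eq)
  have split: "real ((v - 1) * g) / real v = - (real g / real v) + real_of_int (int g)"
    using v0 assms(3) by (simp add: field_simps of_nat_diff)
  have fl2: "\<lfloor>real ((v - 1) * g) / real v\<rfloor> = int g - int ((g + v - 1) div v)"
    unfolding split floor_add_int[symmetric] floor_minus ce by simp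
  have ce2: "\<lceil>real ((v - 1) * g) / real v\<rceil> = int g - int (g div v)"
    unfolding split ceiling_add_of_int ceiling_minus fl by simp
  have cg: "(g + v - 1) div v \<le> g"
  proof -
    have "g + v - 1 \<le> g * v"
    proof -
      have e: "g * v = g * (v - 1) + g" using v0 by (simp add: algebra_simps)
      have h: "v - 1 \<le> g * (v - 1)" using g0 by simp
      show ?thesis using e h v0 by linarith
    qed
    then have "(g + v - 1) div v \<le> g * v div v" by (rule div_le_mono)
    then show ?thesis using v0 by simp
  qed
  have fg: "g div v \<le> g" by simp
  have LOr: "real LO = real_of_int (\<lfloor>real g / real v\<rfloor> ^ t) * real_of_int \<lfloor>real ((v - 1) * g) / real v\<rfloor>"
    unfolding LO_def fl fl2 using cg by (simp add: of_nat_diff)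
  have HIr: "real HI = real_of_int (\<lceil>real g / real v\<rceil> ^ t) * real_of_int \<lceil>real ((v - 1) * g) / real v\<rceil>"
    unfolding HI_def ce ce2 using fg by (simp add: of_nat_diff)
  have A: "real ((v - 1) * LO * (q div v)) \<le> real (rho p g v b t)" using nat_lo by (simp only: of_nat_le_iff)
  have B': "real (rho p g v b t) \<le> real ((v - 1) * HI * ((q + 1 + v - 1) div v))" using nat_hi by (simp only: of_nat_le_iff)
  show ?thesis
    using A B' unfolding of_nat_mult LOr HIr flq ceq
    by (simp add: mult.assoc)
qed


end
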